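(* Let $T$ be a spherically homogeneous rooted tree in which every vertex has at least $2$ children, and let $G\le\mathrm{Aut}~T$ be a just-infinite branch group. Then $G$ has property $\mathrm{(VRC)}$ if and only if $G$ is torsion.
   Context: $\mathrm{Aut}~T$ is the group of automorphisms of $T$ fixing the root; $\mathcal{L}_n$ is the $n$th level; $T_v$ is the subtree of descendants of $v$. For $G\le\mathrm{Aut}~T$, $\mathrm{rist}_G(v)$ is the subgroup of elements of $G$ fixing every vertex outside $T_v$, and $\mathrm{Rist}_G(n)=\prod_{v\in\mathcal{L}_n}\mathrm{rist}_G(v)$. $G$ is branch if it acts transitively on every level and each $\mathrm{Rist}_G(n)$ has finite index in $G$. A group is just-infinite if it is infinite and every non-trivial normal subgroup has finite index. $H\le G$ is a virtual retract of $G$ if there is a finite-index $K\le G$ containing $H$ and a homomorphism $K\to H$ restricting to the identity on $H$. $G$ has property $\mathrm{(VRC)}$ if every cyclic subgroup of $G$ is a virtual retract of $G$. $G$ is torsion if every element has finite order. *)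

theory Defs
  imports "HOL-Algebra.Algebra"
begin

text \<open>The spherically homogeneous rooted tree with branching sequence m:
  vertices at level n are words x_0 ... x_(n-1) with x_i < m i; the root is [].\<close>

definition tree_vertices :: "(nat \<Rightarrow> nat) \<Rightarrow> nat list set" where
  "tree_vertices m = {xs. \<forall>i<length xs. xs ! i < m i}"

definition tree_level :: "(nat \<Rightarrow> nat) \<Rightarrow> nat \<Rightarrow> nat list set" where
  "tree_level m n = {xs \<in> tree_vertices m. length xs = n}"

definition subtree :: "(nat \<Rightarrow> nat) \<Rightarrow> nat list \<Rightarrow> nat list set" where
  "subtree m v = {w \<in> tree_vertices m. \<exists>ys. w = v @ ys}"

text \<open>Automorphisms of T fixing the root: bijections of the vertex set preserving
  the edge (parent-child) relation in both directions, fixing the root; extended by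
  the identity outside the vertex set so that they form a group under composition.\<close>
definition is_tree_aut :: "(nat \<Rightarrow> nat) \<Rightarrow> (nat list \<Rightarrow> nat list) \<Rightarrow> bool" where
  "is_tree_aut m f \<longleftrightarrow>
     bij_betw f (tree_vertices m) (tree_vertices m)
   \<and> (\<forall>x. x \<notin> tree_vertices m \<longrightarrow> f x = x)
   \<and> f [] = []
   \<and> (\<forall>u\<in>tree_vertices m. \<forall>v\<in>tree_vertices m.
        (\<exists>i. v = u @ [i]) \<longleftrightarrow> (\<exists>i. f v = f u @ [i]))"

definition aut_tree :: "(nat \<Rightarrow> nat) \<Rightarrow> (nat list \<Rightarrow> nat list) monoid" where
  "aut_tree m = \<lparr>carrier = {f. is_tree_aut m f}, monoid.mult = (\<circ>), one = id\<rparr>"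

abbreviation sub_grp :: "(nat \<Rightarrow> nat) \<Rightarrow> (nat list \<Rightarrow> nat list) set \<Rightarrow> (nat list \<Rightarrow> nat list) monoid" where
  "sub_grp m H \<equiv> (aut_tree m)\<lparr>carrier := H\<rparr>"

definition finite_index :: "(nat \<Rightarrow> nat) \<Rightarrow> (nat list \<Rightarrow> nat list) set \<Rightarrow> (nat list \<Rightarrow> nat list) set \<Rightarrow> bool" where
  "finite_index m G K \<longleftrightarrow> finite (rcosets\<^bsub>sub_grp m G\<^esub> K)"

definition rist :: "(nat \<Rightarrow> nat) \<Rightarrow> (nat list \<Rightarrow> nat list) set \<Rightarrow> nat list \<Rightarrow> (nat list \<Rightarrow> nat list) set" where
  "rist m G v = {g \<in> G. \<forall>w \<in> tree_vertices m. w \<notin> subtree m v \<longrightarrow> g w = w}"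

text \<open>Rist_G(n): the (internal, direct) product of the rigid stabilisers of level n,
  i.e. the subgroup they generate.\<close>
definition Rist :: "(nat \<Rightarrow> nat) \<Rightarrow> (nat list \<Rightarrow> nat list) set \<Rightarrow> nat \<Rightarrow> (nat list \<Rightarrow> nat list) set" where
  "Rist m G n = generate (aut_tree m) (\<Union>v \<in> tree_level m n. rist m G v)"

definition level_transitive :: "(nat \<Rightarrow> nat) \<Rightarrow> (nat list \<Rightarrow> nat list) set \<Rightarrow> bool" where
  "level_transitive m G \<longleftrightarrow>
     (\<forall>n. \<forall>u \<in> tree_level m n. \<forall>v \<in> tree_level m n. \<exists>g \<in> G. g u = v)"

definition branch_group :: "(nat \<Rightarrow> nat) \<Rightarrow> (nat list \<Rightarrow> nat list) set \<Rightarrow> bool" where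
  "branch_group m G \<longleftrightarrow> level_transitive m G \<and> (\<forall>n. finite_index m G (Rist m G n))"

definition just_infinite :: "(nat \<Rightarrow> nat) \<Rightarrow> (nat list \<Rightarrow> nat list) set \<Rightarrow> bool" where
  "just_infinite m G \<longleftrightarrow> infinite G \<and>
     (\<forall>N. N \<lhd> sub_grp m G \<and> N \<noteq> {\<one>\<^bsub>aut_tree m\<^esub>} \<longrightarrow> finite_index m G N)"

definition virtual_retract :: "(nat \<Rightarrow> nat) \<Rightarrow> (nat list \<Rightarrow> nat list) set \<Rightarrow> (nat list \<Rightarrow> nat list) set \<Rightarrow> bool" where
  "virtual_retract m G H \<longleftrightarrow>
     (\<exists>K. subgroup K (sub_grp m G) \<and> finite_index m G K \<and> H \<subseteq> K \<and>
        (\<exists>\<phi> \<in> hom (sub_grp m K) (sub_grp m H). \<forall>h \<in> H. \<phi> h = h))"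

definition has_VRC :: "(nat \<Rightarrow> nat) \<Rightarrow> (nat list \<Rightarrow> nat list) set \<Rightarrow> bool" where
  "has_VRC m G \<longleftrightarrow> (\<forall>g \<in> G. virtual_retract m G (generate (aut_tree m) {g}))"

definition torsion_group :: "(nat \<Rightarrow> nat) \<Rightarrow> (nat list \<Rightarrow> nat list) set \<Rightarrow> bool" where
  "torsion_group m G \<longleftrightarrow> (\<forall>g \<in> G. \<exists>n::nat. n > 0 \<and> g [^]\<^bsub>aut_tree m\<^esub> n = \<one>\<^bsub>aut_tree m\<^esub>)"

end

theory Submission
  imports Defs
begin

abbreviation V where "V m \<equiv> tree_vertices m"

lemma tv_append: "xs @ ys \<in> V m \<Longrightarrow> xs \<in> V m"
proof -
  assume h: "xs @ ys \<in> V m"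
  show ?thesis unfolding tree_vertices_def
  proof (safe)
    fix i assume "i < length xs"
    then show "xs ! i < m i" using h unfolding tree_vertices_def
      by (auto simp: nth_append dest: spec[of _ i])
  qed
qed

lemma tv_take: "xs \<in> V m \<Longrightarrow> take n xs \<in> V m"
  by (metis append_take_drop_id tv_append)

lemma aut_carrier: "f \<in> carrier (aut_tree m) \<longleftrightarrow> is_tree_aut m f"
  by (simp add: aut_tree_def)

lemma aut_mult[simp]: "x \<otimes>\<^bsub>aut_tree m\<^esub> y = x \<circ> y" by (simp add: aut_tree_def)
lemma aut_one[simp]: "\<one>\<^bsub>aut_tree m\<^esub> = id" by (simp add: aut_tree_def)

lemma aut_bij: "is_tree_aut m f \<Longrightarrow> bij_betw f (V m) (V m)"
  unfolding is_tree_aut_def by (elim conjE)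
lemma aut_out_all: "is_tree_aut m f \<Longrightarrow> \<forall>x. x \<notin> V m \<longrightarrow> f x = x"
  unfolding is_tree_aut_def by (elim conjE)
lemma aut_root: "is_tree_aut m f \<Longrightarrow> f [] = []"
  unfolding is_tree_aut_def by (elim conjE)
lemma aut_edge_all: "is_tree_aut m f \<Longrightarrow> \<forall>u\<in>V m. \<forall>v\<in>V m. (\<exists>i. v = u @ [i]) \<longleftrightarrow> (\<exists>i. f v = f u @ [i])"
  unfolding is_tree_aut_def by (elim conjE)
lemma aut_V: "is_tree_aut m f \<Longrightarrow> u \<in> V m \<Longrightarrow> f u \<in> V m"
  by (rule bij_betwE[OF aut_bij, rule_format])
lemma aut_out: "is_tree_aut m f \<Longrightarrow> u \<notin> V m \<Longrightarrow> f u = u"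
  by (rule aut_out_all[rule_format])
lemma aut_inj: "is_tree_aut m f \<Longrightarrow> u \<in> V m \<Longrightarrow> w \<in> V m \<Longrightarrow> f u = f w \<Longrightarrow> u = w"
  by (rule inj_onD[OF bij_betw_imp_inj_on[OF aut_bij]])
lemma aut_edge: "is_tree_aut m f \<Longrightarrow> u \<in> V m \<Longrightarrow> v \<in> V m \<Longrightarrow>
   (\<exists>i. v = u @ [i]) \<longleftrightarrow> (\<exists>i. f v = f u @ [i])"
  by (rule aut_edge_all[rule_format])

lemma aut_desc: assumes "is_tree_aut m f" shows "v @ ys \<in> V m \<Longrightarrow> \<exists>zs. f (v @ ys) = f v @ zs \<and> length zs = length ys"
proof (induction ys rule: rev_induct)
  case Nil then show ?case by simp
next
  case (snoc y ys)
  have u: "v @ ys \<in> V m" using snoc.prems tv_append[of "v@ys" "[y]"] by simp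
  obtain zs where zs: "f (v @ ys) = f v @ zs" "length zs = length ys" using snoc.IH u by blast
  have "\<exists>i. f (v @ ys @ [y]) = f (v @ ys) @ [i]"
    using aut_edge[OF assms u snoc.prems] by simp
  then obtain i where "f (v @ ys @ [y]) = f (v @ ys) @ [i]" by blast
  then show ?case using zs by (intro exI[of _ "zs @ [i]"]) auto
qed

lemma aut_len: assumes f: "is_tree_aut m f" and u: "u \<in> V m" shows "length (f u) = length u"
proof -
  obtain zs where "f ([] @ u) = f [] @ zs" "length zs = length u"
    using aut_desc[OF f, of "[]" u] u by auto
  then show ?thesis using aut_root[OF f] by simp
qed

lemma aut_ext: assumes f: "is_tree_aut m f" and g: "is_tree_aut m g" and h: "\<And>u. u \<in> V m \<Longrightarrow> f u = g u"
  shows "f = g"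
proof (rule ext)
  fix u
  show "f u = g u" by (cases "u \<in> V m") (simp_all add: h aut_out[OF f] aut_out[OF g])
qed

definition finv :: "(nat \<Rightarrow> nat) \<Rightarrow> (nat list \<Rightarrow> nat list) \<Rightarrow> nat list \<Rightarrow> nat list" where
  "finv m f = (\<lambda>x. if x \<in> V m then inv_into (V m) f x else x)"

lemma finv_in: "x \<in> V m \<Longrightarrow> finv m f x = inv_into (V m) f x"
  by (simp add: finv_def)
lemma finv_out: "x \<notin> V m \<Longrightarrow> finv m f x = x"
  by (simp add: finv_def)

lemma finv_aut: assumes f: "is_tree_aut m f" shows "is_tree_aut m (finv m f)"
proof -
  have b: "bij_betw f (V m) (V m)" using aut_bij[OF f] .
  have b2: "bij_betw (finv m f) (V m) (V m)"
  proof -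
    have "bij_betw (finv m f) (V m) (V m) = bij_betw (inv_into (V m) f) (V m) (V m)"
      by (rule bij_betw_cong) (rule finv_in)
    then show ?thesis using bij_betw_inv_into[OF b] by blast
  qed
  have fi: "\<And>x. x \<in> V m \<Longrightarrow> f (finv m f x) = x"
    using b by (simp add: finv_in bij_betw_inv_into_right)
  have fv: "\<And>x. x \<in> V m \<Longrightarrow> finv m f x \<in> V m" using b2 bij_betwE by blast
  have r: "finv m f [] = []"
  proof -
    have e: "[] \<in> V m" by (simp add: tree_vertices_def)
    have "inv_into (V m) f (f []) = []"
      using inv_into_f_f[OF bij_betw_imp_inj_on[OF b] e] .
    then show ?thesis using finv_in[OF e, of f] aut_root[OF f] by simp
  qed
  have e: "\<forall>u\<in>V m. \<forall>v\<in>V m. (\<exists>i. v = u @ [i]) \<longleftrightarrow> (\<exists>i. finv m f v = finv m f u @ [i])"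
  proof (intro ballI)
    fix u v assume u: "u \<in> V m" and v: "v \<in> V m"
    have "(\<exists>i. finv m f v = finv m f u @ [i]) \<longleftrightarrow> (\<exists>i. f (finv m f v) = f (finv m f u) @ [i])"
      using aut_edge[OF f fv[OF u] fv[OF v]] .
    then show "(\<exists>i. v = u @ [i]) \<longleftrightarrow> (\<exists>i. finv m f v = finv m f u @ [i])"
      using fi[OF u] fi[OF v] by simp
  qed
  show ?thesis unfolding is_tree_aut_def
  proof (intro conjI allI impI)
    show "bij_betw (finv m f) (V m) (V m)" by (rule b2)
  next
    fix x assume "x \<notin> V m" then show "finv m f x = x" by (rule finv_out)
  next
    show "finv m f [] = []" by (rule r)
  next
    show "\<forall>u\<in>V m. \<forall>v\<in>V m. (\<exists>i. v = u @ [i]) \<longleftrightarrow> (\<exists>i. finv m f v = finv m f u @ [i])" by (rule e)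
  qed
qed

lemma finv_l: assumes f: "is_tree_aut m f" shows "finv m f \<circ> f = id"
proof
  fix x
  have b: "bij_betw f (V m) (V m)" using aut_bij[OF f] .
  show "(finv m f \<circ> f) x = id x"
  proof (cases "x \<in> V m")
    case True then show ?thesis using finv_in[OF aut_V[OF f True], of f]
      inv_into_f_f[OF bij_betw_imp_inj_on[OF b] True] by simp
  next
    case False then show ?thesis using aut_out[OF f False] finv_out[OF False] by simp
  qed
qed

lemma finv_r: assumes f: "is_tree_aut m f" shows "f \<circ> finv m f = id"
proof
  fix x
  have b: "bij_betw f (V m) (V m)" using aut_bij[OF f] .
  show "(f \<circ> finv m f) x = id x"
  proof (cases "x \<in> V m")
    case True then show ?thesis using finv_in[OF True, of f]
      bij_betw_inv_into_right[OF b True] by simp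
  next
    case False then show ?thesis using aut_out[OF f False] finv_out[OF False] by simp
  qed
qed

lemma comp_aut: assumes f: "is_tree_aut m f" and g: "is_tree_aut m g" shows "is_tree_aut m (f \<circ> g)"
  unfolding is_tree_aut_def
proof (intro conjI allI impI ballI)
  show "bij_betw (f \<circ> g) (V m) (V m)" using bij_betw_trans[OF aut_bij[OF g] aut_bij[OF f]] .
next
  fix x assume "x \<notin> V m" then show "(f \<circ> g) x = x" using aut_out[OF f] aut_out[OF g] by simp
next
  show "(f \<circ> g) [] = []" using aut_root[OF f] aut_root[OF g] by simp
next
  fix u v assume u: "u \<in> V m" and v: "v \<in> V m"
  show "(\<exists>i. v = u @ [i]) \<longleftrightarrow> (\<exists>i. (f \<circ> g) v = (f \<circ> g) u @ [i])"
    using aut_edge[OF g u v] aut_edge[OF f aut_V[OF g u] aut_V[OF g v]] by simp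
qed

lemma id_aut: "is_tree_aut m id"
  unfolding is_tree_aut_def by simp

lemma aut_group: "group (aut_tree m)"
proof (rule groupI)
  fix x assume "x \<in> carrier (aut_tree m)"
  then have x: "is_tree_aut m x" by (simp add: aut_carrier)
  show "\<exists>y\<in>carrier (aut_tree m). y \<otimes>\<^bsub>aut_tree m\<^esub> x = \<one>\<^bsub>aut_tree m\<^esub>"
    using finv_aut[OF x] finv_l[OF x] by (auto simp: aut_carrier)
qed (auto simp: aut_carrier comp_aut id_aut o_assoc)

lemma aut_inv: "is_tree_aut m f \<Longrightarrow> inv\<^bsub>aut_tree m\<^esub> f = finv m f"
  by (rule group.inv_equality[OF aut_group]) (auto simp: aut_carrier finv_l finv_aut)

lemma finv_cancel1[simp]: "is_tree_aut m f \<Longrightarrow> f \<circ> (finv m f \<circ> h) = h"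
  by (metis finv_r comp_id o_assoc id_comp)
lemma finv_cancel2[simp]: "is_tree_aut m f \<Longrightarrow> finv m f \<circ> (f \<circ> h) = h"
  by (metis finv_l o_assoc id_comp)
lemma finv_cancel3[simp]: "is_tree_aut m f \<Longrightarrow> f (finv m f x) = x"
  by (metis finv_r comp_apply id_apply)
lemma finv_cancel4[simp]: "is_tree_aut m f \<Longrightarrow> finv m f (f x) = x"
  by (metis finv_l comp_apply id_apply)
lemma finv_r'[simp]: "is_tree_aut m f \<Longrightarrow> f \<circ> finv m f = id" by (rule finv_r)
lemma finv_l'[simp]: "is_tree_aut m f \<Longrightarrow> finv m f \<circ> f = id" by (rule finv_l)

lemma finv_unique: "is_tree_aut m f \<Longrightarrow> g \<circ> f = id \<Longrightarrow> finv m f = g"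
  by (metis finv_r comp_id o_assoc id_comp)

lemma finv_comp: "is_tree_aut m f \<Longrightarrow> is_tree_aut m g \<Longrightarrow> finv m (f \<circ> g) = finv m g \<circ> finv m f"
  by (rule finv_unique) (auto simp: comp_aut o_assoc[symmetric])
lemma finv_finv: "is_tree_aut m f \<Longrightarrow> finv m (finv m f) = f"
  by (rule finv_unique) (auto simp: finv_aut)
lemma finv_id[simp]: "finv m id = id"
  by (rule finv_unique) (auto simp: id_aut)


lemma sub_mult[simp]: "x \<otimes>\<^bsub>sub_grp m G\<^esub> y = x \<circ> y" by (simp add: aut_tree_def)
lemma sub_one[simp]: "\<one>\<^bsub>sub_grp m G\<^esub> = id" by (simp add: aut_tree_def)

definition cos :: "(nat list \<Rightarrow> nat list) set \<Rightarrow> (nat list \<Rightarrow> nat list) \<Rightarrow> (nat list \<Rightarrow> nat list) set" where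
  "cos K a = (\<lambda>h. h \<circ> a) ` K"

lemma rcosets_eq: "rcosets\<^bsub>sub_grp m G\<^esub> K = cos K ` G"
  unfolding RCOSETS_def r_coset_def cos_def by auto

definition csub :: "(nat \<Rightarrow> nat) \<Rightarrow> (nat list \<Rightarrow> nat list) set \<Rightarrow> bool" where
  "csub m K \<longleftrightarrow> (\<forall>x\<in>K. is_tree_aut m x) \<and> id \<in> K \<and> (\<forall>x\<in>K. \<forall>y\<in>K. x \<circ> y \<in> K) \<and> (\<forall>x\<in>K. finv m x \<in> K)"

lemma csubD: assumes "csub m K"
  shows "x \<in> K \<Longrightarrow> is_tree_aut m x" "id \<in> K" "x \<in> K \<Longrightarrow> y \<in> K \<Longrightarrow> x \<circ> y \<in> K"
    "x \<in> K \<Longrightarrow> finv m x \<in> K"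
  using assms unfolding csub_def by blast+

lemma cos_self: "id \<in> K \<Longrightarrow> a \<in> cos K a"
  unfolding cos_def by (rule image_eqI[where x=id]) simp_all

lemma csub_subgroup: assumes "csub m K" shows "subgroup K (aut_tree m)"
proof (rule group.subgroupI)
  show "K \<subseteq> carrier (aut_tree m)" using csubD(1)[OF assms] by (auto simp: aut_carrier)
  show "K \<noteq> {}" using csubD(2)[OF assms] by blast
  fix a assume a: "a \<in> K"
  show "inv\<^bsub>aut_tree m\<^esub> a \<in> K" using aut_inv[OF csubD(1)[OF assms a]] csubD(4)[OF assms a] by simp
  fix b assume "b \<in> K" then show "a \<otimes>\<^bsub>aut_tree m\<^esub> b \<in> K" using csubD(3)[OF assms a] by simp
qed (rule aut_group)

lemma subgroup_csub: assumes "subgroup K (aut_tree m)" shows "csub m K"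
  unfolding csub_def
proof (intro conjI ballI)
  fix x assume x: "x \<in> K"
  show xa: "is_tree_aut m x" using subgroup.subset[OF assms] x by (auto simp: aut_carrier)
  show "finv m x \<in> K" using subgroup.m_inv_closed[OF assms x] aut_inv[OF xa] by simp
  fix y assume "y \<in> K" then show "x \<circ> y \<in> K" using subgroup.m_closed[OF assms x] by simp
next
  show "id \<in> K" using subgroup.one_closed[OF assms] by simp
qed

lemma sub_subgroup_csub: assumes "subgroup G (aut_tree m)" "subgroup K (sub_grp m G)" shows "csub m K"
proof -
  have KG: "K \<subseteq> G" using subgroup.subset[OF assms(2)] by simp
  have "subgroup K (aut_tree m)"
  proof (rule csub_subgroup, unfold csub_def, intro conjI ballI)
    fix x assume x: "x \<in> K"
    have xG: "x \<in> G" using x KG by blast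
    show xa: "is_tree_aut m x" using subgroup.subset[OF assms(1)] xG by (auto simp: aut_carrier)
    have "inv\<^bsub>sub_grp m G\<^esub> x \<in> K" using subgroup.m_inv_closed[OF assms(2) x] by simp
    then show "finv m x \<in> K" using group.m_inv_consistent[OF aut_group assms(1) xG] aut_inv[OF xa] by simp
    fix y assume "y \<in> K" then show "x \<circ> y \<in> K" using subgroup.m_closed[OF assms(2) x] by simp
  next
    show "id \<in> K" using subgroup.one_closed[OF assms(2)] by simp
  qed
  then show ?thesis by (rule subgroup_csub)
qed

lemma csub_sub_subgroup: assumes "subgroup G (aut_tree m)" "csub m K" "K \<subseteq> G" shows "subgroup K (sub_grp m G)"
proof (rule group.subgroupI)
  show "group (sub_grp m G)" by (rule subgroup.subgroup_is_group[OF assms(1) aut_group])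
  show "K \<subseteq> carrier (sub_grp m G)" using assms(3) by simp
  show "K \<noteq> {}" using csubD(2)[OF assms(2)] by blast
  fix a assume a: "a \<in> K"
  have aG: "a \<in> G" using a assms(3) by blast
  show "inv\<^bsub>sub_grp m G\<^esub> a \<in> K"
    using group.m_inv_consistent[OF aut_group assms(1) aG] aut_inv[OF csubD(1)[OF assms(2) a]] csubD(4)[OF assms(2) a] by simp
  fix b assume "b \<in> K" then show "a \<otimes>\<^bsub>sub_grp m G\<^esub> b \<in> K" using csubD(3)[OF assms(2) a] by simp
qed

lemma cos_eqI: assumes K: "csub m K" and a: "is_tree_aut m a" and b: "is_tree_aut m b" and ab: "a \<circ> finv m b \<in> K"
  shows "cos K a = cos K b"
proof -
  have 1: "cos K a \<subseteq> cos K b"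
  proof
    fix x assume "x \<in> cos K a"
    then obtain h where h: "h \<in> K" "x = h \<circ> a" unfolding cos_def by blast
    have "x = (h \<circ> (a \<circ> finv m b)) \<circ> b" using h b by (simp add: o_assoc[symmetric])
    moreover have "h \<circ> (a \<circ> finv m b) \<in> K" using csubD(3)[OF K h(1) ab] .
    ultimately show "x \<in> cos K b" unfolding cos_def by blast
  qed
  have ba: "b \<circ> finv m a \<in> K"
  proof -
    have "finv m (a \<circ> finv m b) = b \<circ> finv m a"
      by (rule finv_unique) (use a b finv_aut[OF b] in \<open>auto simp: comp_aut o_assoc[symmetric]\<close>)
    then show ?thesis using csubD(4)[OF K ab] by simp
  qed
  have 2: "cos K b \<subseteq> cos K a"
  proof
    fix x assume "x \<in> cos K b"
    then obtain h where h: "h \<in> K" "x = h \<circ> b" unfolding cos_def by blast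
    have "x = (h \<circ> (b \<circ> finv m a)) \<circ> a" using h a by (simp add: o_assoc[symmetric])
    moreover have "h \<circ> (b \<circ> finv m a) \<in> K" using csubD(3)[OF K h(1) ba] .
    ultimately show "x \<in> cos K a" unfolding cos_def by blast
  qed
  show ?thesis using 1 2 by blast
qed

lemma cos_eqD: assumes K: "csub m K" and b: "is_tree_aut m b" and e: "cos K a = cos K b"
  shows "a \<circ> finv m b \<in> K"
proof -
  have "a \<in> cos K a" using csubD(2)[OF K] by (rule cos_self)
  then obtain h where "h \<in> K" "a = h \<circ> b" using e unfolding cos_def by blast
  then show ?thesis using b by (simp add: o_assoc[symmetric])
qed

lemma finite_indexI: assumes K: "csub m K" and GA: "\<forall>x\<in>G. is_tree_aut m x"
  and F: "\<And>a b. a \<in> G \<Longrightarrow> b \<in> G \<Longrightarrow> F a = F b \<Longrightarrow> a \<circ> finv m b \<in> K"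
  and fin: "finite (F ` G)"
  shows "finite_index m G K"
proof -
  let ?r = "\<lambda>y. cos K (SOME a. a \<in> G \<and> F a = y)"
  have "cos K ` G \<subseteq> ?r ` (F ` G)"
  proof
    fix c assume "c \<in> cos K ` G"
    then obtain a where a: "a \<in> G" "c = cos K a" by blast
    define a' where "a' = (SOME a'. a' \<in> G \<and> F a' = F a)"
    have a': "a' \<in> G \<and> F a' = F a" unfolding a'_def by (rule someI[of _ a]) (use a in blast)
    have "cos K a = cos K a'"
      by (rule cos_eqI[OF K]) (use a a' GA F[of a a'] in auto)
    then show "c \<in> ?r ` (F ` G)" using a a'_def by blast
  qed
  then show ?thesis unfolding finite_index_def rcosets_eq using fin finite_surj by blast
qed

lemma finite_index_finite: assumes fi: "finite_index m G K" and K: "finite K" and idK: "id \<in> K"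
  shows "finite G"
proof -
  have "G \<subseteq> \<Union>(cos K ` G)" using cos_self[OF idK] by blast
  moreover have "finite (\<Union>(cos K ` G))"
    using fi K unfolding finite_index_def rcosets_eq cos_def by blast
  ultimately show ?thesis using finite_subset by blast
qed

lemma finite_index_pigeon: assumes fi: "finite_index m G K" and K: "csub m K" and S: "S \<subseteq> G"
  and GA: "\<forall>x\<in>G. is_tree_aut m x" and inf: "infinite S"
  shows "\<exists>x\<in>S. \<exists>y\<in>S. x \<noteq> y \<and> x \<circ> finv m y \<in> K"
proof -
  have "finite (cos K ` S)" using fi S unfolding finite_index_def rcosets_eq
    by (meson finite_subset image_mono)
  then have "\<not> inj_on (cos K) S" using inf finite_imageD by blast
  then obtain x y where "x \<in> S" "y \<in> S" "x \<noteq> y" "cos K x = cos K y" unfolding inj_on_def by blast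
  then show ?thesis using cos_eqD[OF K, of y x] GA S by blast
qed


lemma subtree_iff: "u \<in> subtree m v \<longleftrightarrow> u \<in> V m \<and> (\<exists>ys. u = v @ ys)"
  by (simp add: subtree_def)

lemma level_iff: "v \<in> tree_level m n \<longleftrightarrow> v \<in> V m \<and> length v = n"
  by (simp add: tree_level_def)

lemma subtree_take: "v \<in> tree_level m n \<Longrightarrow> u \<in> subtree m v \<Longrightarrow> take n u = v \<and> n \<le> length u"
  by (auto simp: subtree_iff level_iff)

lemma subtree_same_len: "u \<in> subtree m v \<Longrightarrow> length u = length v \<Longrightarrow> u = v"
  by (auto simp: subtree_iff)

lemma rist_mem: "r \<in> rist m G v \<longleftrightarrow> r \<in> G \<and> (\<forall>w\<in>V m. w \<notin> subtree m v \<longrightarrow> r w = w)"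
  by (simp add: rist_def)

lemma rist_fix_v: assumes G: "csub m G" and r: "r \<in> rist m G v" and v: "v \<in> V m"
  shows "r v = v"
proof (rule ccontr)
  assume ne: "r v \<noteq> v"
  have ra: "is_tree_aut m r" using r csubD(1)[OF G] by (simp add: rist_mem)
  have rv: "r v \<in> V m" using aut_V[OF ra v] .
  have "r v \<notin> subtree m v" using subtree_same_len[of "r v" m v] aut_len[OF ra v] ne by blast
  then have "r (r v) = r v" using r rv by (simp add: rist_mem)
  then have "r v = v" using aut_inj[OF ra rv v] by simp
  then show False using ne by simp
qed

lemma rist_subtree: assumes G: "csub m G" and r: "r \<in> rist m G v" and v: "v \<in> V m" and u: "u \<in> subtree m v"
  shows "r u \<in> subtree m v"
proof -
  have ra: "is_tree_aut m r" using r csubD(1)[OF G] by (simp add: rist_mem)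
  obtain ys where u': "u \<in> V m" "u = v @ ys" using u by (auto simp: subtree_iff)
  obtain zs where "r (v @ ys) = r v @ zs" using aut_desc[OF ra, of v ys] u' by blast
  then show ?thesis using rist_fix_v[OF G r v] aut_V[OF ra u'(1)] u' by (auto simp: subtree_iff)
qed

lemma rist_id: "csub m G \<Longrightarrow> id \<in> rist m G v"
  using csubD(2) by (simp add: rist_mem)

lemma rist_comp: assumes "csub m G" "r \<in> rist m G v" "s \<in> rist m G v" shows "r \<circ> s \<in> rist m G v"
  using assms csubD(3)[OF assms(1)] by (simp add: rist_mem)

lemma rist_finv: assumes G: "csub m G" and r: "r \<in> rist m G v" shows "finv m r \<in> rist m G v"
proof -
  have ra: "is_tree_aut m r" using r csubD(1)[OF G] by (simp add: rist_mem)
  have "\<forall>w\<in>V m. w \<notin> subtree m v \<longrightarrow> finv m r w = w"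
  proof (intro ballI impI)
    fix w assume "w \<in> V m" "w \<notin> subtree m v"
    then have "r w = w" using r by (simp add: rist_mem)
    then show "finv m r w = w" using finv_cancel4[OF ra, of w] by simp
  qed
  then show ?thesis using csubD(4)[OF G] r by (simp add: rist_mem)
qed

lemma finite_ball: "finite {u \<in> V m. length u \<le> n}"
proof -
  let ?A = "\<Union>i<n. {..<m i}"
  have "{u \<in> V m. length u \<le> n} \<subseteq> {xs. set xs \<subseteq> ?A \<and> length xs \<le> n}"
  proof (safe)
    fix u x assume u: "u \<in> V m" "length u \<le> n" and x: "x \<in> set u"
    then obtain i where "i < length u" "u ! i = x" by (meson in_set_conv_nth)
    then show "x \<in> ?A" using u unfolding tree_vertices_def by force
  qed
  moreover have "finite {xs. set xs \<subseteq> ?A \<and> length xs \<le> n}"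
    by (rule finite_lists_length_le) simp
  ultimately show ?thesis using finite_subset by blast
qed

lemma finite_level: "finite (tree_level m n)"
  by (rule finite_subset[OF _ finite_ball[of m n]]) (auto simp: level_iff)


definition Sset :: "(nat \<Rightarrow> nat) \<Rightarrow> (nat list \<Rightarrow> nat list) set \<Rightarrow> nat \<Rightarrow> (nat list \<Rightarrow> nat list) set" where
  "Sset m G n = {f. (\<forall>u. u \<notin> V m \<longrightarrow> f u = u) \<and> (\<forall>u\<in>V m. length u < n \<longrightarrow> f u = u) \<and>
     (\<forall>v\<in>tree_level m n. \<exists>r\<in>rist m G v. \<forall>u\<in>subtree m v. f u = r u)}"

lemma gen_in_S: assumes G: "csub m G" and v': "v' \<in> tree_level m n" and h: "h \<in> rist m G v'"
  shows "h \<in> Sset m G n"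
  unfolding Sset_def
proof (intro CollectI conjI allI impI ballI)
  have ha: "is_tree_aut m h" using h csubD(1)[OF G] by (simp add: rist_mem)
  fix u assume "u \<notin> V m" then show "h u = u" by (rule aut_out[OF ha])
next
  fix u assume u: "u \<in> V m" "length u < n"
  then have "u \<notin> subtree m v'" using subtree_take[OF v'] by force
  then show "h u = u" using h u by (simp add: rist_mem)
next
  fix v assume v: "v \<in> tree_level m n"
  show "\<exists>r\<in>rist m G v. \<forall>u\<in>subtree m v. h u = r u"
  proof (cases "v = v'")
    case True then show ?thesis using h by blast
  next
    case False
    have "\<forall>u\<in>subtree m v. h u = id u"
    proof
      fix u assume u: "u \<in> subtree m v"
      have "u \<notin> subtree m v'" using subtree_take[OF v u] subtree_take[OF v'] False by force
      then show "h u = id u" using h u by (simp add: rist_mem subtree_iff)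
    qed
    then show ?thesis using rist_id[OF G] by blast
  qed
qed

lemma S_comp: assumes G: "csub m G" and f: "f \<in> Sset m G n" and g: "g \<in> Sset m G n"
  shows "f \<circ> g \<in> Sset m G n"
  unfolding Sset_def
proof (intro CollectI conjI allI impI ballI)
  fix u assume "u \<notin> V m" then show "(f \<circ> g) u = u" using f g by (simp add: Sset_def)
next
  fix u assume "u \<in> V m" "length u < n" then show "(f \<circ> g) u = u" using f g by (simp add: Sset_def)
next
  fix v assume v: "v \<in> tree_level m n"
  obtain rf where rf: "rf \<in> rist m G v" "\<forall>u\<in>subtree m v. f u = rf u" using f v by (auto simp: Sset_def)
  obtain rg where rg: "rg \<in> rist m G v" "\<forall>u\<in>subtree m v. g u = rg u" using g v by (auto simp: Sset_def)
  have vV: "v \<in> V m" using v by (simp add: level_iff)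
  have "\<forall>u\<in>subtree m v. (f \<circ> g) u = (rf \<circ> rg) u"
  proof
    fix u assume u: "u \<in> subtree m v"
    have "rg u \<in> subtree m v" by (rule rist_subtree[OF G rg(1) vV u])
    then show "(f \<circ> g) u = (rf \<circ> rg) u" using rf(2) rg(2) u by simp
  qed
  then show "\<exists>r\<in>rist m G v. \<forall>u\<in>subtree m v. (f \<circ> g) u = r u" using rist_comp[OF G rf(1) rg(1)] by blast
qed

lemma Rist_sub_S: assumes G: "csub m G" shows "Rist m G n \<subseteq> Sset m G n"
proof
  fix x assume "x \<in> Rist m G n"
  then show "x \<in> Sset m G n" unfolding Rist_def
  proof (induction rule: generate.induct)
    case one
    have "id \<in> Sset m G n" unfolding Sset_def by (auto intro!: bexI[where x=id] rist_id[OF G])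
    then show ?case by (simp only: aut_one)
  next
    case (incl h) then show ?case using gen_in_S[OF G] by blast
  next
    case (inv h)
    then obtain v where v: "v \<in> tree_level m n" "h \<in> rist m G v" by blast
    have ha: "is_tree_aut m h" using v(2) csubD(1)[OF G] by (simp add: rist_mem)
    show ?case using gen_in_S[OF G v(1) rist_finv[OF G v(2)]] aut_inv[OF ha] by simp
  next
    case (eng h1 h2) then show ?case by (simp only: aut_mult) (blast intro: S_comp[OF G])
  qed
qed

lemma Rist_finite: assumes G: "csub m G" and fin: "\<forall>v\<in>tree_level m n. finite (rist m G v)"
  shows "finite (Rist m G n)"
proof -
  let ?L = "tree_level m n"
  let ?glue = "\<lambda>c u. if u \<in> V m \<and> n \<le> length u then c (take n u) u else u"
  have "Sset m G n \<subseteq> ?glue ` (PiE ?L (rist m G))"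
  proof
    fix f assume f: "f \<in> Sset m G n"
    define c where "c = (\<lambda>v\<in>?L. SOME r. r \<in> rist m G v \<and> (\<forall>u\<in>subtree m v. f u = r u))"
    have c: "\<And>v. v \<in> ?L \<Longrightarrow> c v \<in> rist m G v \<and> (\<forall>u\<in>subtree m v. f u = c v u)"
    proof -
      fix v assume v: "v \<in> ?L"
      let ?P = "\<lambda>r. r \<in> rist m G v \<and> (\<forall>u\<in>subtree m v. f u = r u)"
      obtain r where r: "?P r" using f v unfolding Sset_def by blast
      have hs: "?P (SOME r. ?P r)" by (rule someI[of ?P r, OF r])
      have ceq: "c v = (SOME r. ?P r)" unfolding c_def using v by simp
      show "c v \<in> rist m G v \<and> (\<forall>u\<in>subtree m v. f u = c v u)" unfolding ceq by (rule hs)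
    qed
    have cP: "c \<in> PiE ?L (rist m G)" using c unfolding c_def PiE_def by auto
    have "f = ?glue c"
    proof
      fix u show "f u = ?glue c u"
      proof (cases "u \<in> V m \<and> n \<le> length u")
        case True
        have tl: "take n u \<in> ?L" using True tv_take[of u m n] by (simp add: level_iff)
        have "u \<in> subtree m (take n u)" using True
          by (simp add: subtree_iff) (metis append_take_drop_id)
        then show ?thesis using c[OF tl] True by simp
      next
        case False
        have f1: "\<forall>u. u \<notin> V m \<longrightarrow> f u = u" and f2: "\<forall>u\<in>V m. length u < n \<longrightarrow> f u = u"
          using f unfolding Sset_def by blast+
        have "f u = u"
        proof (cases "u \<in> V m")
          case True then have "length u < n" using False by simp
          then show ?thesis using f2 True by blast
        next
          case False then show ?thesis using f1 by blast
        qed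
        moreover have "?glue c u = u" by (simp only: if_not_P[OF False])
        ultimately show ?thesis by simp
      qed
    qed
    then show "f \<in> ?glue ` (PiE ?L (rist m G))" using cP by blast
  qed
  moreover have "finite (PiE ?L (rist m G))" using finite_PiE[OF finite_level] fin by blast
  then have "finite (?glue ` (PiE ?L (rist m G)))" by (rule finite_imageI)
  ultimately have "finite (Sset m G n)" by (rule finite_subset)
  then show ?thesis using Rist_sub_S[OF G] by (rule finite_subset[rotated])
qed


lemma exists_moved: assumes a: "is_tree_aut m a" and ne: "a \<noteq> id" shows "\<exists>w\<in>V m. a w \<noteq> w"
proof (rule ccontr)
  assume "\<not> (\<exists>w\<in>V m. a w \<noteq> w)"
  then have "a = id" by (intro aut_ext[OF a id_aut]) auto
  then show False using ne by simp
qed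

lemma finv_conj: assumes "is_tree_aut m x" "is_tree_aut m a" shows "finv m (x \<circ> a \<circ> finv m x) = x \<circ> finv m a \<circ> finv m x"
  using assms by (simp add: finv_comp comp_aut finv_aut finv_finv o_assoc)

lemma nva: assumes Gc: "csub m G" and inf: "infinite G" and br: "branch_group m G"
  and A: "csub m A" and AG: "A \<subseteq> G" and fiA: "finite_index m G A"
  and conj: "\<forall>x\<in>A. \<forall>z\<in>G. z \<circ> x \<circ> finv m z \<in> A"
  and comm: "\<forall>x\<in>A. \<forall>y\<in>A. x \<circ> y = y \<circ> x"
  shows False
proof -
  have GA: "\<forall>x\<in>G. is_tree_aut m x" using csubD(1)[OF Gc] by blast
  obtain a where a: "a \<in> A" "a \<noteq> id"
  proof (rule ccontr)
    assume "\<not> thesis"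
    then have "A \<subseteq> {id}" using that by blast
    then have "finite A" using finite_subset by blast
    then have "finite G" using finite_index_finite[OF fiA _ csubD(2)[OF A]] by blast
    then show False using inf by simp
  qed
  have aa: "is_tree_aut m a" using csubD(1)[OF A a(1)] .
  obtain w where w: "w \<in> V m" "a w \<noteq> w" using exists_moved[OF aa a(2)] by blast
  define n where "n = length w"
  have wl: "w \<in> tree_level m n" using w n_def by (simp add: level_iff)
  obtain v where v: "v \<in> tree_level m n" "infinite (rist m G v)"
  proof (rule ccontr)
    assume "\<not> thesis"
    then have "\<forall>v\<in>tree_level m n. finite (rist m G v)" using that by blast
    then have fR: "finite (Rist m G n)" by (rule Rist_finite[OF Gc])
    have "id \<in> Rist m G n" unfolding Rist_def using generate.one[of "aut_tree m"] by simp
    then have "finite G" using finite_index_finite[OF _ fR] br unfolding branch_group_def by blast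
    then show False using inf by simp
  qed
  have vV: "v \<in> V m" using v(1) by (simp add: level_iff)
  obtain x where x: "x \<in> G" "x w = v" using br wl v(1) unfolding branch_group_def level_transitive_def by blast
  have xa: "is_tree_aut m x" using GA x(1) by blast
  define a' where "a' = x \<circ> a \<circ> finv m x"
  have a'A: "a' \<in> A" unfolding a'_def using conj a(1) x(1) by blast
  have a'a: "is_tree_aut m a'" using csubD(1)[OF A a'A] .
  have "finv m x v = w" using x(2) finv_cancel4[OF xa, of w] by simp
  then have a'v: "a' v = x (a w)" unfolding a'_def by simp
  have a'v_ne: "a' v \<noteq> v"
  proof
    assume "a' v = v"
    then have "x (a w) = x w" using a'v x(2) by simp
    then have "a w = w" using aut_inj[OF xa aut_V[OF aa w(1)] w(1)] by simp
    then show False using w(2) by simp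
  qed
  have rG: "rist m G v \<subseteq> G" by (auto simp: rist_mem)
  obtain r1 r2 where r: "r1 \<in> rist m G v" "r2 \<in> rist m G v" "r1 \<noteq> r2" "r1 \<circ> finv m r2 \<in> A"
    using finite_index_pigeon[OF fiA A rG GA v(2)] by blast
  define b where "b = r1 \<circ> finv m r2"
  have bR: "b \<in> rist m G v" unfolding b_def by (rule rist_comp[OF Gc r(1) rist_finv[OF Gc r(2)]])
  have bA: "b \<in> A" using r(4) b_def by simp
  have ba: "is_tree_aut m b" using csubD(1)[OF A bA] .
  have r2a: "is_tree_aut m r2" using GA r(2) rG by blast
  have b_ne: "b \<noteq> id"
  proof
    assume "b = id"
    then have "r1 \<circ> finv m r2 \<circ> r2 = r2" by (simp add: b_def)
    then have "r1 = r2" using r2a by (simp add: o_assoc[symmetric])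
    then show False using r(3) by simp
  qed
  obtain u where u: "u \<in> V m" "b u \<noteq> u" using exists_moved[OF ba b_ne] by blast
  have uS: "u \<in> subtree m v" using u bR by (auto simp: rist_mem)
  then obtain ys where ys: "u = v @ ys" by (auto simp: subtree_iff)
  obtain zs where zs: "a' (v @ ys) = a' v @ zs" using aut_desc[OF a'a, of v ys] u ys by blast
  have la: "length (a' v) = length v" using aut_len[OF a'a vV] .
  have a'uV: "a' u \<in> V m" using aut_V[OF a'a u(1)] .
  have "a' u \<notin> subtree m v"
  proof
    assume "a' u \<in> subtree m v"
    then obtain ys' where "a' u = v @ ys'" by (auto simp: subtree_iff)
    then have "a' v @ zs = v @ ys'" using zs ys by simp
    then have "take (length v) (a' v @ zs) = take (length v) (v @ ys')" by simp
    then have "a' v = v" using la by simp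
    then show False using a'v_ne by simp
  qed
  then have fixb: "b (a' u) = a' u" using bR a'uV by (simp add: rist_mem)
  have "a' \<circ> b = b \<circ> a'" using comm a'A bA by blast
  then have "b (a' u) = a' (b u)" by (metis comp_apply)
  then have "a' (b u) = a' u" using fixb by simp
  then have "b u = u" using aut_inj[OF a'a aut_V[OF ba u(1)] u(1)] by simp
  then show False using u(2) by simp
qed


lemma conj_finv: assumes z: "is_tree_aut m z" and x: "is_tree_aut m x"
  shows "finv m (finv m z \<circ> x \<circ> z) = finv m z \<circ> finv m x \<circ> z"
  by (rule finv_unique) (use z x in \<open>simp_all add: comp_aut finv_aut o_assoc[symmetric]\<close>)

lemma conj_comp: assumes z: "is_tree_aut m z"
  shows "finv m z \<circ> (x \<circ> y) \<circ> z = (finv m z \<circ> x \<circ> z) \<circ> (finv m z \<circ> y \<circ> z)"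
  using z by (simp add: o_assoc[symmetric])

lemma cyc_comm: assumes g: "is_tree_aut m g" and x: "x \<in> generate (aut_tree m) {g}"
  and y: "y \<in> generate (aut_tree m) {g}" shows "x \<circ> y = y \<circ> x"
proof -
  have gc: "g \<in> carrier (aut_tree m)" by (simp add: aut_carrier g)
  obtain i :: int where i: "x = g [^]\<^bsub>aut_tree m\<^esub> i" using group.generate_pow[OF aut_group gc] x by blast
  obtain j :: int where j: "y = g [^]\<^bsub>aut_tree m\<^esub> j" using group.generate_pow[OF aut_group gc] y by blast
  have "x \<circ> y = g [^]\<^bsub>aut_tree m\<^esub> (i + j)" using group.int_pow_mult[OF aut_group gc, of i j] i j by simp
  moreover have "y \<circ> x = g [^]\<^bsub>aut_tree m\<^esub> (j + i)" using group.int_pow_mult[OF aut_group gc, of j i] i j by simp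
  ultimately show ?thesis by (simp add: add.commute)
qed


lemma va:
  assumes G: "subgroup G (aut_tree m)" and ji: "just_infinite m G" and g: "g \<in> G"
    and ninf: "\<forall>n::nat. n > 0 \<longrightarrow> g [^]\<^bsub>aut_tree m\<^esub> n \<noteq> id"
    and vr: "virtual_retract m G (generate (aut_tree m) {g})"
  shows "\<exists>A. csub m A \<and> A \<subseteq> G \<and> finite_index m G A \<and> (\<forall>x\<in>A. \<forall>z\<in>G. z \<circ> x \<circ> finv m z \<in> A)
     \<and> (\<forall>x\<in>A. \<forall>y\<in>A. x \<circ> y = y \<circ> x)"
proof -
  have Gc: "csub m G" by (rule subgroup_csub[OF G])
  have GA: "\<forall>x\<in>G. is_tree_aut m x" using csubD(1)[OF Gc] by blast
  define H where "H = generate (aut_tree m) {g}"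
  have ga: "is_tree_aut m g" using GA g by blast
  have gc: "g \<in> carrier (aut_tree m)" by (simp add: aut_carrier ga)
  have Hsub: "subgroup H (aut_tree m)" unfolding H_def
    by (rule group.generate_is_subgroup[OF aut_group]) (use gc in simp)
  have Hc: "csub m H" by (rule subgroup_csub[OF Hsub])
  have HG: "H \<subseteq> G" unfolding H_def
    by (rule group.generate_subgroup_incl[OF aut_group _ G]) (use g in simp)
  have Hcomm: "\<And>x y. x \<in> H \<Longrightarrow> y \<in> H \<Longrightarrow> x \<circ> y = y \<circ> x" unfolding H_def by (rule cyc_comm[OF ga])
  have Hinf: "infinite H"
  proof
    assume "finite H"
    moreover have "carrier (subgroup_generated (aut_tree m) {g}) = H"
      unfolding H_def carrier_subgroup_generated using gc by (simp add: Int_absorb1)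
    ultimately obtain n :: nat where "n \<noteq> 0" "g [^]\<^bsub>aut_tree m\<^esub> n = \<one>\<^bsub>aut_tree m\<^esub>"
      using group.finite_cyclic_subgroup[OF aut_group gc] by auto
    then show False using ninf by simp
  qed
  obtain K \<phi> where K: "subgroup K (sub_grp m G)" and fiK: "finite_index m G K" and HK: "H \<subseteq> K"
    and hom: "\<phi> \<in> hom (sub_grp m K) (sub_grp m H)" and phid: "\<forall>h\<in>H. \<phi> h = h"
    using vr unfolding virtual_retract_def H_def by blast
  have Kc: "csub m K" by (rule sub_subgroup_csub[OF G K])
  have KG: "K \<subseteq> G" using subgroup.subset[OF K] by simp
  have phiH: "\<And>k. k \<in> K \<Longrightarrow> \<phi> k \<in> H" using hom_in_carrier[OF hom] by simp
  have phim: "\<And>k1 k2. k1 \<in> K \<Longrightarrow> k2 \<in> K \<Longrightarrow> \<phi> (k1 \<circ> k2) = \<phi> k1 \<circ> \<phi> k2"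
    using hom unfolding hom_def by simp
  have phi_id: "\<phi> id = id" using phid csubD(2)[OF Hc] by blast
  have phi_inv: "\<And>k. k \<in> K \<Longrightarrow> \<phi> (finv m k) = finv m (\<phi> k)"
  proof -
    fix k assume k: "k \<in> K"
    have ka: "is_tree_aut m k" using csubD(1)[OF Kc k] .
    have pa: "is_tree_aut m (\<phi> k)" using csubD(1)[OF Hc phiH[OF k]] .
    have "\<phi> k \<circ> \<phi> (finv m k) = id" using phim[OF k csubD(4)[OF Kc k]] ka phi_id by simp
    then have "finv m (\<phi> k) \<circ> (\<phi> k \<circ> \<phi> (finv m k)) = finv m (\<phi> k)" by simp
    then show "\<phi> (finv m k) = finv m (\<phi> k)" using pa by simp
  qed
  define C where "C = {c \<in> G. \<forall>z\<in>G. finv m z \<circ> c \<circ> z \<in> K \<and> \<phi> (finv m z \<circ> c \<circ> z) = id}"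
  have Cc: "csub m C" unfolding csub_def
  proof (intro conjI ballI)
    fix x assume "x \<in> C" then show "is_tree_aut m x" using GA unfolding C_def by blast
  next
    show "id \<in> C" unfolding C_def using csubD(2)[OF Gc] csubD(2)[OF Kc] phi_id GA by auto
  next
    fix x y assume x: "x \<in> C" and y: "y \<in> C"
    show "x \<circ> y \<in> C" unfolding C_def
    proof (intro CollectI conjI ballI)
      show "x \<circ> y \<in> G" using x y csubD(3)[OF Gc] unfolding C_def by blast
      fix z assume z: "z \<in> G"
      have za: "is_tree_aut m z" using GA z by blast
      have e: "finv m z \<circ> (x \<circ> y) \<circ> z = (finv m z \<circ> x \<circ> z) \<circ> (finv m z \<circ> y \<circ> z)" by (rule conj_comp[OF za])
      have xk: "finv m z \<circ> x \<circ> z \<in> K" "\<phi> (finv m z \<circ> x \<circ> z) = id" using x z unfolding C_def by blast+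
      have yk: "finv m z \<circ> y \<circ> z \<in> K" "\<phi> (finv m z \<circ> y \<circ> z) = id" using y z unfolding C_def by blast+
      show "finv m z \<circ> (x \<circ> y) \<circ> z \<in> K" unfolding e using csubD(3)[OF Kc xk(1) yk(1)] .
      show "\<phi> (finv m z \<circ> (x \<circ> y) \<circ> z) = id" unfolding e using phim[OF xk(1) yk(1)] xk(2) yk(2) by simp
    qed
  next
    fix x assume x: "x \<in> C"
    show "finv m x \<in> C" unfolding C_def
    proof (intro CollectI conjI ballI)
      show "finv m x \<in> G" using x csubD(4)[OF Gc] unfolding C_def by blast
      have xa: "is_tree_aut m x" using x GA unfolding C_def by blast
      fix z assume z: "z \<in> G"
      have za: "is_tree_aut m z" using GA z by blast
      have xk: "finv m z \<circ> x \<circ> z \<in> K" "\<phi> (finv m z \<circ> x \<circ> z) = id" using x z unfolding C_def by blast+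
      have e: "finv m z \<circ> finv m x \<circ> z = finv m (finv m z \<circ> x \<circ> z)" using conj_finv[OF za xa] by simp
      show "finv m z \<circ> finv m x \<circ> z \<in> K" unfolding e using csubD(4)[OF Kc xk(1)] .
      show "\<phi> (finv m z \<circ> finv m x \<circ> z) = id" unfolding e using phi_inv[OF xk(1)] xk(2) by simp
    qed
  qed
  have CG: "C \<subseteq> G" unfolding C_def by blast
  have grpG: "group (sub_grp m G)" by (rule subgroup.subgroup_is_group[OF G aut_group])
  have Cn: "C \<lhd> sub_grp m G"
  proof -
    have "subgroup C (sub_grp m G)" by (rule csub_sub_subgroup[OF G Cc CG])
    moreover have "\<forall>x\<in>carrier (sub_grp m G). \<forall>h\<in>C. x \<otimes>\<^bsub>sub_grp m G\<^esub> h \<otimes>\<^bsub>sub_grp m G\<^esub> inv\<^bsub>sub_grp m G\<^esub> x \<in> C"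
    proof (intro ballI)
      fix x h assume x: "x \<in> carrier (sub_grp m G)" and h: "h \<in> C"
      have xG: "x \<in> G" using x by simp
      have xa: "is_tree_aut m x" using GA xG by blast
      have iv: "inv\<^bsub>sub_grp m G\<^esub> x = finv m x"
        using group.m_inv_consistent[OF aut_group G xG] aut_inv[OF xa] by simp
      have "x \<circ> h \<circ> finv m x \<in> C" unfolding C_def
      proof (intro CollectI conjI ballI)
        show "x \<circ> h \<circ> finv m x \<in> G" using xG h CG csubD(3,4)[OF Gc] by blast
        fix z assume z: "z \<in> G"
        have za: "is_tree_aut m z" using GA z by blast
        have z'G: "finv m x \<circ> z \<in> G" using xG z csubD(3,4)[OF Gc] by blast
        have e: "finv m z \<circ> (x \<circ> h \<circ> finv m x) \<circ> z = finv m (finv m x \<circ> z) \<circ> h \<circ> (finv m x \<circ> z)"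
          using xa za by (simp add: finv_comp finv_aut finv_finv o_assoc[symmetric])
        show "finv m z \<circ> (x \<circ> h \<circ> finv m x) \<circ> z \<in> K" unfolding e using h z'G unfolding C_def by blast
        show "\<phi> (finv m z \<circ> (x \<circ> h \<circ> finv m x) \<circ> z) = id" unfolding e using h z'G unfolding C_def by blast
      qed
      then show "x \<otimes>\<^bsub>sub_grp m G\<^esub> h \<otimes>\<^bsub>sub_grp m G\<^esub> inv\<^bsub>sub_grp m G\<^esub> x \<in> C" using iv by simp
    qed
    ultimately show ?thesis using group.normal_inv_iff[OF grpG] by blast
  qed
  have Ctriv: "C = {id}"
  proof (rule ccontr)
    assume "C \<noteq> {id}"
    then have fiC: "finite_index m G C" using ji Cn unfolding just_infinite_def by simp
    obtain x y where xy: "x \<in> H" "y \<in> H" "x \<noteq> y" "x \<circ> finv m y \<in> C"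
      using finite_index_pigeon[OF fiC Cc HG GA Hinf] by blast
    let ?c = "x \<circ> finv m y"
    have cH: "?c \<in> H" using csubD(3,4)[OF Hc] xy by blast
    have "\<phi> (finv m id \<circ> ?c \<circ> id) = id" using xy(4) csubD(2)[OF Gc] unfolding C_def by blast
    then have "?c = id" using phid cH by simp
    then have "?c \<circ> y = y" by simp
    then have "x = y" using csubD(1)[OF Hc xy(2)] by (simp add: o_assoc[symmetric])
    then show False using xy(3) by simp
  qed
  define K0 where "K0 = {c \<in> G. \<forall>z\<in>G. finv m z \<circ> c \<circ> z \<in> K}"
  have K0c: "csub m K0" unfolding csub_def
  proof (intro conjI ballI)
    fix x assume "x \<in> K0" then show "is_tree_aut m x" using GA unfolding K0_def by blast
  next
    show "id \<in> K0" unfolding K0_def using csubD(2)[OF Gc] csubD(2)[OF Kc] GA by auto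
  next
    fix x y assume x: "x \<in> K0" and y: "y \<in> K0"
    show "x \<circ> y \<in> K0" unfolding K0_def
    proof (intro CollectI conjI ballI)
      show "x \<circ> y \<in> G" using x y csubD(3)[OF Gc] unfolding K0_def by blast
      fix z assume z: "z \<in> G"
      have za: "is_tree_aut m z" using GA z by blast
      have e: "finv m z \<circ> (x \<circ> y) \<circ> z = (finv m z \<circ> x \<circ> z) \<circ> (finv m z \<circ> y \<circ> z)" by (rule conj_comp[OF za])
      have xk: "finv m z \<circ> x \<circ> z \<in> K" using x z unfolding K0_def by blast
      have yk: "finv m z \<circ> y \<circ> z \<in> K" using y z unfolding K0_def by blast
      show "finv m z \<circ> (x \<circ> y) \<circ> z \<in> K" unfolding e using csubD(3)[OF Kc xk yk] .
    qed
  next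
    fix x assume x: "x \<in> K0"
    show "finv m x \<in> K0" unfolding K0_def
    proof (intro CollectI conjI ballI)
      show "finv m x \<in> G" using x csubD(4)[OF Gc] unfolding K0_def by blast
      have xa: "is_tree_aut m x" using x GA unfolding K0_def by blast
      fix z assume z: "z \<in> G"
      have za: "is_tree_aut m z" using GA z by blast
      have xk: "finv m z \<circ> x \<circ> z \<in> K" using x z unfolding K0_def by blast
      have e: "finv m z \<circ> finv m x \<circ> z = finv m (finv m z \<circ> x \<circ> z)" using conj_finv[OF za xa] by simp
      show "finv m z \<circ> finv m x \<circ> z \<in> K" unfolding e using csubD(4)[OF Kc xk] .
    qed
  qed
  have K0G: "K0 \<subseteq> G" unfolding K0_def by blast
  have K0conj: "\<forall>x\<in>K0. \<forall>z\<in>G. z \<circ> x \<circ> finv m z \<in> K0"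
  proof (intro ballI)
    fix x z assume x: "x \<in> K0" and z: "z \<in> G"
    have za: "is_tree_aut m z" using GA z by blast
    show "z \<circ> x \<circ> finv m z \<in> K0" unfolding K0_def
    proof (intro CollectI conjI ballI)
      show "z \<circ> x \<circ> finv m z \<in> G" using x z K0G csubD(3,4)[OF Gc] by blast
      fix z' assume z': "z' \<in> G"
      have z'a: "is_tree_aut m z'" using GA z' by blast
      have wG: "finv m z \<circ> z' \<in> G" using z z' csubD(3,4)[OF Gc] by blast
      have e: "finv m z' \<circ> (z \<circ> x \<circ> finv m z) \<circ> z' = finv m (finv m z \<circ> z') \<circ> x \<circ> (finv m z \<circ> z')"
        using za z'a by (simp add: finv_comp finv_aut finv_finv o_assoc[symmetric])
      show "finv m z' \<circ> (z \<circ> x \<circ> finv m z) \<circ> z' \<in> K" unfolding e using x wG unfolding K0_def by blast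
    qed
  qed
  have fiK0: "finite_index m G K0"
  proof -
    let ?R = "cos K ` G"
    let ?F = "\<lambda>a. restrict (\<lambda>S. (\<lambda>s. s \<circ> a) ` S) ?R"
    have cimg: "\<And>a c. (\<lambda>s. s \<circ> a) ` cos K c = cos K (c \<circ> a)"
      unfolding cos_def image_image by (simp add: o_assoc)
    have finR: "finite ?R" using fiK unfolding finite_index_def rcosets_eq .
    have "?F ` G \<subseteq> PiE ?R (\<lambda>_. ?R)"
    proof
      fix f assume "f \<in> ?F ` G"
      then obtain a where a: "a \<in> G" "f = ?F a" by blast
      have "\<And>S. S \<in> ?R \<Longrightarrow> (\<lambda>s. s \<circ> a) ` S \<in> ?R"
      proof -
        fix S assume "S \<in> ?R"
        then obtain c where c: "c \<in> G" "S = cos K c" by blast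
        have "c \<circ> a \<in> G" using c a csubD(3)[OF Gc] by blast
        then show "(\<lambda>s. s \<circ> a) ` S \<in> ?R" using c cimg by simp
      qed
      note cl = this
      show "f \<in> PiE ?R (\<lambda>_. ?R)" unfolding a(2)
      proof (rule PiE_I)
        fix S assume S: "S \<in> ?R"
        show "?F a S \<in> ?R" unfolding restrict_apply'[OF S] by (rule cl[OF S])
      next
        fix S assume S: "S \<notin> ?R"
        show "?F a S = undefined" using S by (simp only: restrict_apply if_False)
      qed
    qed
    moreover have "finite (PiE ?R (\<lambda>_. ?R))" by (rule finite_PiE[OF finR]) (rule finR)
    ultimately have finF: "finite (?F ` G)" by (rule finite_subset)
    show ?thesis
    proof (rule finite_indexI[OF K0c GA _ finF])
      fix a b assume a: "a \<in> G" and b: "b \<in> G" and e: "?F a = ?F b"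
      have aa: "is_tree_aut m a" and ba: "is_tree_aut m b" using a b GA by blast+
      show "a \<circ> finv m b \<in> K0" unfolding K0_def
      proof (intro CollectI conjI ballI)
        show "a \<circ> finv m b \<in> G" using a b csubD(3,4)[OF Gc] by blast
        fix z assume z: "z \<in> G"
        have za: "is_tree_aut m z" using GA z by blast
        have fz: "finv m z \<in> G" using z csubD(4)[OF Gc] by blast
        have SR: "cos K (finv m z) \<in> ?R" using fz by blast
        have "?F a (cos K (finv m z)) = ?F b (cos K (finv m z))" using e by (rule fun_cong)
        then have "(\<lambda>s. s \<circ> a) ` cos K (finv m z) = (\<lambda>s. s \<circ> b) ` cos K (finv m z)"
          by (simp only: restrict_apply'[OF SR])
        then have "cos K (finv m z \<circ> a) = cos K (finv m z \<circ> b)" by (simp only: cimg)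
        then have "(finv m z \<circ> a) \<circ> finv m (finv m z \<circ> b) \<in> K"
          by (rule cos_eqD[OF Kc comp_aut[OF finv_aut[OF za] ba]])
        moreover have "(finv m z \<circ> a) \<circ> finv m (finv m z \<circ> b) = finv m z \<circ> (a \<circ> finv m b) \<circ> z"
          using za ba by (simp add: finv_comp finv_aut finv_finv o_assoc[symmetric])
        ultimately show "finv m z \<circ> (a \<circ> finv m b) \<circ> z \<in> K" by simp
      qed
    qed
  qed
  have K0comm: "\<forall>x\<in>K0. \<forall>y\<in>K0. x \<circ> y = y \<circ> x"
  proof (intro ballI)
    fix x y assume x: "x \<in> K0" and y: "y \<in> K0"
    have xa: "is_tree_aut m x" and ya: "is_tree_aut m y" using x y csubD(1)[OF K0c] by blast+
    let ?c = "x \<circ> y \<circ> finv m x \<circ> finv m y"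
    have "?c \<in> C" unfolding C_def
    proof (intro CollectI conjI ballI)
      show "?c \<in> G" using x y K0G csubD(3,4)[OF Gc] by blast
      fix z assume z: "z \<in> G"
      have za: "is_tree_aut m z" using GA z by blast
      define x' where "x' = finv m z \<circ> x \<circ> z"
      define y' where "y' = finv m z \<circ> y \<circ> z"
      have x'K: "x' \<in> K" using x z unfolding K0_def x'_def by blast
      have y'K: "y' \<in> K" using y z unfolding K0_def y'_def by blast
      have e: "finv m z \<circ> ?c \<circ> z = x' \<circ> y' \<circ> finv m x' \<circ> finv m y'"
        unfolding x'_def y'_def using za xa ya
        by (simp add: finv_comp comp_aut finv_aut finv_finv o_assoc[symmetric])
      have iK: "finv m x' \<in> K" "finv m y' \<in> K" using csubD(4)[OF Kc] x'K y'K by blast+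
      show "finv m z \<circ> ?c \<circ> z \<in> K" unfolding e using csubD(3)[OF Kc] x'K y'K iK by blast
      have px: "\<phi> x' \<in> H" and py: "\<phi> y' \<in> H" using phiH x'K y'K by blast+
      have pxa: "is_tree_aut m (\<phi> x')" and pya: "is_tree_aut m (\<phi> y')" using csubD(1)[OF Hc] px py by blast+
      have "\<phi> (x' \<circ> y' \<circ> finv m x' \<circ> finv m y') = \<phi> x' \<circ> \<phi> y' \<circ> finv m (\<phi> x') \<circ> finv m (\<phi> y')"
        using phim phi_inv x'K y'K iK csubD(3)[OF Kc] by simp
      also have "\<dots> = \<phi> y' \<circ> \<phi> x' \<circ> finv m (\<phi> x') \<circ> finv m (\<phi> y')" using Hcomm[OF px py] by simp
      also have "\<dots> = id" using pxa pya by (simp add: o_assoc[symmetric])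
      finally show "\<phi> (finv m z \<circ> ?c \<circ> z) = id" unfolding e .
    qed
    then have "?c = id" using Ctriv by simp
    then have "?c \<circ> (y \<circ> x) = y \<circ> x" by simp
    then show "x \<circ> y = y \<circ> x" using xa ya by (simp add: o_assoc[symmetric])
  qed
  show ?thesis using K0c K0G fiK0 K0conj K0comm by blast
qed


lemma aut_ball: "is_tree_aut m f \<Longrightarrow> u \<in> {u \<in> V m. length u \<le> n} \<Longrightarrow> f u \<in> {u \<in> V m. length u \<le> n}"
  using aut_V aut_len by simp

lemma easy:
  assumes G: "subgroup G (aut_tree m)" and tor: "torsion_group m G"
  shows "has_VRC m G"
  unfolding has_VRC_def
proof
  fix g assume g: "g \<in> G"
  have Gc: "csub m G" by (rule subgroup_csub[OF G])
  have GA: "\<forall>x\<in>G. is_tree_aut m x" using csubD(1)[OF Gc] by blast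
  define H where "H = generate (aut_tree m) {g}"
  have ga: "is_tree_aut m g" using GA g by blast
  have gc: "g \<in> carrier (aut_tree m)" by (simp add: aut_carrier ga)
  have Hsub: "subgroup H (aut_tree m)" unfolding H_def
    by (rule group.generate_is_subgroup[OF aut_group]) (use gc in simp)
  have Hc: "csub m H" by (rule subgroup_csub[OF Hsub])
  have HA: "\<forall>x\<in>H. is_tree_aut m x" using csubD(1)[OF Hc] by blast
  have HG: "H \<subseteq> G" unfolding H_def
    by (rule group.generate_subgroup_incl[OF aut_group _ G]) (use g in simp)
  have Hfin: "finite H"
  proof -
    obtain n :: nat where n: "n > 0" "g [^]\<^bsub>aut_tree m\<^esub> n = \<one>\<^bsub>aut_tree m\<^esub>"
      using tor g unfolding torsion_group_def by blast
    have "carrier (subgroup_generated (aut_tree m) {g}) = H"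
      unfolding H_def carrier_subgroup_generated using gc by (simp add: Int_absorb1)
    moreover have "finite (carrier (subgroup_generated (aut_tree m) {g}))"
      using group.finite_cyclic_subgroup[OF aut_group gc] n by auto
    ultimately show ?thesis by simp
  qed
  define wit where "wit = (\<lambda>h. SOME w. w \<in> V m \<and> h w \<noteq> w)"
  have wit: "\<And>h. h \<in> H \<Longrightarrow> h \<noteq> id \<Longrightarrow> wit h \<in> V m \<and> h (wit h) \<noteq> wit h"
  proof -
    fix h assume "h \<in> H" "h \<noteq> id"
    then have "\<exists>w. w \<in> V m \<and> h w \<noteq> w" using exists_moved HA by blast
    then show "wit h \<in> V m \<and> h (wit h) \<noteq> wit h" unfolding wit_def by (rule someI_ex)
  qed
  define n where "n = Max (insert 0 ((\<lambda>h. length (wit h)) ` (H - {id})))"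
  have nge: "\<And>h. h \<in> H \<Longrightarrow> h \<noteq> id \<Longrightarrow> length (wit h) \<le> n"
    unfolding n_def using Hfin by (intro Max_ge) auto
  define B where "B = {u \<in> V m. length u \<le> n}"
  have Bfin: "finite B" unfolding B_def by (rule finite_ball)
  have autB: "\<And>f u. is_tree_aut m f \<Longrightarrow> u \<in> B \<Longrightarrow> f u \<in> B" unfolding B_def by (rule aut_ball)
  have P: "\<And>h. h \<in> H \<Longrightarrow> (\<forall>u\<in>B. h u = u) \<Longrightarrow> h = id"
  proof (rule ccontr)
    fix h assume h: "h \<in> H" "\<forall>u\<in>B. h u = u" "h \<noteq> id"
    have "wit h \<in> B" using wit[OF h(1) h(3)] nge[OF h(1) h(3)] unfolding B_def by simp
    then show False using h(2) wit[OF h(1) h(3)] by simp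
  qed
  have uniq: "\<And>h1 h2. h1 \<in> H \<Longrightarrow> h2 \<in> H \<Longrightarrow> \<forall>u\<in>B. h1 u = h2 u \<Longrightarrow> h1 = h2"
  proof -
    fix h1 h2 assume h: "h1 \<in> H" "h2 \<in> H" "\<forall>u\<in>B. h1 u = h2 u"
    have h2a: "is_tree_aut m h2" using HA h(2) by blast
    have cH: "h1 \<circ> finv m h2 \<in> H" using csubD(3,4)[OF Hc] h by blast
    have "\<forall>u\<in>B. (h1 \<circ> finv m h2) u = u"
    proof
      fix u assume u: "u \<in> B"
      have "finv m h2 u \<in> B" using autB[OF finv_aut[OF h2a] u] .
      then have "h1 (finv m h2 u) = h2 (finv m h2 u)" using h(3) by blast
      then show "(h1 \<circ> finv m h2) u = u" using h2a by simp
    qed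
    then have "h1 \<circ> finv m h2 = id" using P cH by blast
    then have "h1 \<circ> finv m h2 \<circ> h2 = h2" by simp
    then show "h1 = h2" using h2a by (simp add: o_assoc[symmetric])
  qed
  define K where "K = {k \<in> G. \<exists>h\<in>H. \<forall>u\<in>B. k u = h u}"
  have KG: "K \<subseteq> G" unfolding K_def by blast
  have HK: "H \<subseteq> K" unfolding K_def using HG by blast
  have Kc: "csub m K" unfolding csub_def
  proof (intro conjI ballI)
    fix x assume "x \<in> K" then show "is_tree_aut m x" using GA KG by blast
  next
    show "id \<in> K" using HK csubD(2)[OF Hc] by blast
  next
    fix x y assume x: "x \<in> K" and y: "y \<in> K"
    obtain hx where hx: "hx \<in> H" "\<forall>u\<in>B. x u = hx u" using x unfolding K_def by blast
    obtain hy where hy: "hy \<in> H" "\<forall>u\<in>B. y u = hy u" using y unfolding K_def by blast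
    have "\<forall>u\<in>B. (x \<circ> y) u = (hx \<circ> hy) u"
    proof
      fix u assume u: "u \<in> B"
      have "hy u \<in> B" using autB[OF _ u] HA hy(1) by blast
      then show "(x \<circ> y) u = (hx \<circ> hy) u" using hx(2) hy(2) u by simp
    qed
    moreover have "hx \<circ> hy \<in> H" using csubD(3)[OF Hc hx(1) hy(1)] .
    moreover have "x \<circ> y \<in> G" using csubD(3)[OF Gc] x y KG by blast
    ultimately show "x \<circ> y \<in> K" unfolding K_def by blast
  next
    fix x assume x: "x \<in> K"
    obtain hx where hx: "hx \<in> H" "\<forall>u\<in>B. x u = hx u" using x unfolding K_def by blast
    have xa: "is_tree_aut m x" using GA KG x by blast
    have hxa: "is_tree_aut m hx" using HA hx(1) by blast
    have "\<forall>u\<in>B. finv m x u = finv m hx u"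
    proof
      fix u assume u: "u \<in> B"
      have u'B: "finv m hx u \<in> B" using autB[OF finv_aut[OF hxa] u] .
      then have "x (finv m hx u) = u" using hx(2) hxa by simp
      then have "finv m x (x (finv m hx u)) = finv m x u" by simp
      then show "finv m x u = finv m hx u" using xa by simp
    qed
    moreover have "finv m hx \<in> H" using csubD(4)[OF Hc hx(1)] .
    moreover have "finv m x \<in> G" using csubD(4)[OF Gc] x KG by blast
    ultimately show "finv m x \<in> K" unfolding K_def by blast
  qed
  have Ksub: "subgroup K (sub_grp m G)" by (rule csub_sub_subgroup[OF G Kc KG])
  have fiK: "finite_index m G K"
  proof (rule finite_indexI[OF Kc GA, of "\<lambda>y. restrict y B"])
    fix a b assume a: "a \<in> G" and b: "b \<in> G" and e: "restrict a B = restrict b B"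
    have ba: "is_tree_aut m b" using GA b by blast
    have "\<forall>u\<in>B. (a \<circ> finv m b) u = id u"
    proof
      fix u assume u: "u \<in> B"
      have u'B: "finv m b u \<in> B" using autB[OF finv_aut[OF ba] u] .
      have "a (finv m b u) = b (finv m b u)" using fun_cong[OF e, of "finv m b u"] u'B by simp
      then show "(a \<circ> finv m b) u = id u" using ba by simp
    qed
    moreover have "a \<circ> finv m b \<in> G" using csubD(3,4)[OF Gc] a b by blast
    ultimately show "a \<circ> finv m b \<in> K" unfolding K_def using csubD(2)[OF Hc] by blast
  next
    have "(\<lambda>y. restrict y B) ` G \<subseteq> PiE B (\<lambda>_. B)"
    proof
      fix f assume "f \<in> (\<lambda>y. restrict y B) ` G"
      then obtain y where y: "y \<in> G" "f = restrict y B" by blast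
      have "\<And>u. u \<in> B \<Longrightarrow> y u \<in> B" using autB GA y(1) by blast
      note yB = this
      show "f \<in> PiE B (\<lambda>_. B)" unfolding y(2)
      proof (rule PiE_I)
        fix u assume u: "u \<in> B"
        show "restrict y B u \<in> B" unfolding restrict_apply'[OF u] by (rule yB[OF u])
      next
        fix u assume u: "u \<notin> B"
        show "restrict y B u = undefined" using u by (simp only: restrict_apply if_False)
      qed
    qed
    moreover have "finite (PiE B (\<lambda>_. B))" by (rule finite_PiE[OF Bfin]) (rule Bfin)
    ultimately show "finite ((\<lambda>y. restrict y B) ` G)" by (rule finite_subset)
  qed
  define \<phi> where "\<phi> = (\<lambda>k. THE h. h \<in> H \<and> (\<forall>u\<in>B. k u = h u))"
  have phi_eq: "\<And>k h. h \<in> H \<Longrightarrow> \<forall>u\<in>B. k u = h u \<Longrightarrow> \<phi> k = h"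
  proof -
    fix k h assume h: "h \<in> H" "\<forall>u\<in>B. k u = h u"
    show "\<phi> k = h" unfolding \<phi>_def
    proof (rule the_equality)
      show "h \<in> H \<and> (\<forall>u\<in>B. k u = h u)" using h by blast
      fix h' assume h': "h' \<in> H \<and> (\<forall>u\<in>B. k u = h' u)"
      have "\<forall>u\<in>B. h' u = h u"
      proof
        fix u assume u: "u \<in> B"
        have "k u = h' u" using h' u by blast
        moreover have "k u = h u" using h(2) u by blast
        ultimately show "h' u = h u" by simp
      qed
      then show "h' = h" using uniq[of h' h] h h' by blast
    qed
  qed
  have phiK: "\<And>k. k \<in> K \<Longrightarrow> \<phi> k \<in> H \<and> (\<forall>u\<in>B. k u = \<phi> k u)"
  proof -
    fix k assume "k \<in> K"
    then obtain h where h: "h \<in> H" "\<forall>u\<in>B. k u = h u" unfolding K_def by blast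
    then show "\<phi> k \<in> H \<and> (\<forall>u\<in>B. k u = \<phi> k u)" using phi_eq[OF h] by simp
  qed
  have hom: "\<phi> \<in> hom (sub_grp m K) (sub_grp m H)"
  proof (rule homI)
    fix x assume "x \<in> carrier (sub_grp m K)"
    then show "\<phi> x \<in> carrier (sub_grp m H)" using phiK by simp
  next
    fix x y assume x: "x \<in> carrier (sub_grp m K)" and y: "y \<in> carrier (sub_grp m K)"
    have x': "\<phi> x \<in> H" "\<forall>u\<in>B. x u = \<phi> x u" using phiK x by simp_all
    have y': "\<phi> y \<in> H" "\<forall>u\<in>B. y u = \<phi> y u" using phiK y by simp_all
    have "\<forall>u\<in>B. (x \<circ> y) u = (\<phi> x \<circ> \<phi> y) u"
    proof
      fix u assume u: "u \<in> B"
      have "\<phi> y u \<in> B" using autB[OF _ u] HA y'(1) by blast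
      then show "(x \<circ> y) u = (\<phi> x \<circ> \<phi> y) u" using x'(2) y'(2) u by simp
    qed
    then have "\<phi> (x \<circ> y) = \<phi> x \<circ> \<phi> y" using phi_eq csubD(3)[OF Hc x'(1) y'(1)] by blast
    then show "\<phi> (x \<otimes>\<^bsub>sub_grp m K\<^esub> y) = \<phi> x \<otimes>\<^bsub>sub_grp m H\<^esub> \<phi> y" by simp
  qed
  have phid: "\<forall>h\<in>H. \<phi> h = h" using phi_eq by blast
  show "virtual_retract m G (generate (aut_tree m) {g})"
    unfolding virtual_retract_def H_def[symmetric] using Ksub fiK HK hom phid by blast
qed


theorem lemma3p8:
  fixes m :: "nat \<Rightarrow> nat" and G :: "(nat list \<Rightarrow> nat list) set"
  assumes "\<forall>n. m n \<ge> 2"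
    and "subgroup G (aut_tree m)"
    and "just_infinite m G"
    and "branch_group m G"
  shows "has_VRC m G \<longleftrightarrow> torsion_group m G"
proof
  assume vrc: "has_VRC m G"
  show "torsion_group m G"
  proof (rule ccontr)
    assume "\<not> torsion_group m G"
    then obtain g where g: "g \<in> G" and ninf: "\<forall>n::nat. n > 0 \<longrightarrow> g [^]\<^bsub>aut_tree m\<^esub> n \<noteq> id"
      unfolding torsion_group_def aut_one by blast
    have vr: "virtual_retract m G (generate (aut_tree m) {g})" using vrc g unfolding has_VRC_def by blast
    obtain A where A: "csub m A" "A \<subseteq> G" "finite_index m G A" "\<forall>x\<in>A. \<forall>z\<in>G. z \<circ> x \<circ> finv m z \<in> A"
      "\<forall>x\<in>A. \<forall>y\<in>A. x \<circ> y = y \<circ> x"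
      using va[OF assms(2) assms(3) g ninf vr] by blast
    have inf: "infinite G" using assms(3) unfolding just_infinite_def by blast
    show False by (rule nva[OF subgroup_csub[OF assms(2)] inf assms(4) A])
  qed
next
  assume "torsion_group m G"
  then show "has_VRC m G" by (rule easy[OF assms(2)])
qed

end
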